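(* Let $V$ be the value function defined in the context, and for $\mathbf Q\in\mathcal Q$, $\mathbf u,\mathbf v\in\mathcal U$ let $J(\mathbf Q,\mathbf u)=g(\mathbf Q,\mathbf u)+\mathbb E[V(\mathbf Q')]$ and $\Delta_{\mathbf u,\mathbf v}(\mathbf Q)=J(\mathbf Q,\mathbf u)-J(\mathbf Q,\mathbf v)$. Then for all $\mathbf u,\mathbf v\in\mathcal U$: (1) if $u_0=m\in\mathcal M_0$, then $\Delta_{\mathbf u,\mathbf v}(\mathbf Q)$ is monotonically non-increasing in $Q_{0,m}$ and in $Q_{n,m}$ for every $n\in\mathcal N_m$ (all other components of $\mathbf Q$ held fixed); (2) if $u_n=m\in\mathcal M_n$ for some $n\in\mathcal N^+$, then $\Delta_{\mathbf u,\mathbf v}(\mathbf Q)$ is monotonically non-increasing in $Q_{n,m}$ (all other components of $\mathbf Q$ held fixed).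
   Context: Model. Let $N\ge 1$, $\mathcal N=\{0,1,\dots,N\}$ (base station $0$ is the macro base station, MBS) and $\mathcal N^+=\{1,\dots,N\}$ (small base stations, SBSs). Let $\mathcal M=\{1,\dots,M\}$ be the set of contents. For each $n\in\mathcal N$ let $\mathcal M_n\subseteq\mathcal M$ be the set of contents cached at BS $n$, with $\mathcal M_0=\mathcal M$; put $\tilde{\mathcal M}_n=\mathcal M_n\cup\{0\}$ and $\mathcal N_m=\{n\in\mathcal N^+: m\in\mathcal M_n\}$. Powers $p(n,m)\ge 0$ are given for $n\in\mathcal N$, $m\in\mathcal M_n$, and $p(n,0)=0$. A weight $w\ge 0$ is fixed. The feasible action space is $\mathcal U=\{\mathbf u=(u_n)_{n\in\mathcal N}: u_n\in\tilde{\mathcal M}_n\ \forall n,\ u_0\sum_{n\in\mathcal N^+}u_n=0\}$. A state is $\mathbf Q=(Q_{n,m})_{n\in\mathcal N,m\in\mathcal M_n}$ with $Q_{n,m}\in\mathcal Q_{n,m}=\{0,1,\dots,N_{n,m}\}$ for given positive integers $N_{n,m}$; $\mathcal Q=\prod_{n\in\mathcal N}\prod_{m\in\mathcal M_n}\mathcal Q_{n,m}$. Arrivals $A_{n,m}$ ($n\in\mathcal N$, $m\in\mathcal M$) are mutually independent nonnegative-integer random variables with fixed distributions, i.i.d. across time slots; $\tilde A_{0,m}=A_{0,m}+\sum_{n\in\mathcal N^+\setminus\mathcal N_m}A_{n,m}$. Given state $\mathbf Q$ and action $\mathbf u$, the next state $\mathbf Q'$ is $Q'_{0,m}=\min\{\mathbf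 1(u_0\neq m)Q_{0,m}+\tilde A_{0,m},N_{0,m}\}$ for $m\in\mathcal M_0$ and $Q'_{n,m}=\min\{\mathbf 1(u_0\neq m\text{ and }u_n\neq m)Q_{n,m}+A_{n,m},N_{n,m}\}$ for $n\in\mathcal N^+$, $m\in\mathcal M_n$; $\mathbb E$ denotes expectation over the arrivals. The per-stage cost is $g(\mathbf Q,\mathbf u)=d(\mathbf Q)+w\,p(\mathbf u)$ with $d(\mathbf Q)=\sum_{n\in\mathcal N}\sum_{m\in\mathcal M_n}Q_{n,m}$ and $p(\mathbf u)=\sum_{n\in\mathcal N}p(n,u_n)$. Value function. Fix a reference state $\mathbf Q^\dagger\in\mathcal Q$. Relative value iteration: $V_0\equiv 0$, $J_{l+1}(\mathbf Q,\mathbf u)=g(\mathbf Q,\mathbf u)+\mathbb E[V_l(\mathbf Q')]$, and $V_{l+1}(\mathbf Q)=\min_{\mathbf u\in\mathcal U}J_{l+1}(\mathbf Q,\mathbf u)-\min_{\mathbf u\in\mathcal U}J_{l+1}(\mathbf Q^\dagger,\mathbf u)$ for $l\ge0$. It is assumed (standing assumption of the paper, guaranteed under its unichain conditions) that $V_l$ converges pointwise to a function $V:\mathcal Q\to\mathbb R$; this $V$ is the value function, which solves the Bellman equation $\theta+V(\mathbf Q)=\min_{\mathbf u\in\mathcal U}\{g(\mathbf Q,\mathbf u)+\mathbb E[V(\mathbf Q')]\}$ for all $\mathbf Q$. *)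

theory Defs
  imports "HOL-Probability.Probability"
begin

text \<open>Base stations are 0..N (0 = MBS), contents 1..M.
 Action 0 at a BS means "idle". States and actions are encoded as total functions
 on nat, with out-of-range entries fixed to 0 (canonical encoding).\<close>

record netw =
  NB    :: nat
  MC    :: nat
  cache :: "nat \<Rightarrow> nat set"
  cap   :: "nat \<Rightarrow> nat \<Rightarrow> nat"
  pw    :: "nat \<Rightarrow> nat \<Rightarrow> real"
  wt    :: real
  arr   :: "nat \<Rightarrow> nat \<Rightarrow> nat pmf"

type_synonym state = "nat \<Rightarrow> nat \<Rightarrow> nat"
type_synonym action = "nat \<Rightarrow> nat"

definition wf_netw :: "netw \<Rightarrow> bool" where
  "wf_netw S \<longleftrightarrow> NB S \<ge> 1 \<and> cache S 0 = {1..MC S}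
     \<and> (\<forall>n\<in>{1..NB S}. cache S n \<subseteq> {1..MC S})
     \<and> (\<forall>n\<le>NB S. \<forall>m\<in>cache S n. cap S n m > 0 \<and> pw S n m \<ge> 0)
     \<and> (\<forall>n\<le>NB S. pw S n 0 = 0)
     \<and> wt S \<ge> 0"

definition Nset :: "netw \<Rightarrow> nat \<Rightarrow> nat set" where
  "Nset S m = {n\<in>{1..NB S}. m \<in> cache S n}"

definition actions :: "netw \<Rightarrow> action set" where
  "actions S = {u. (\<forall>n\<le>NB S. u n \<in> cache S n \<union> {0}) \<and> (\<forall>n>NB S. u n = 0)
                   \<and> u 0 * (\<Sum>n\<in>{1..NB S}. u n) = 0}"

definition states :: "netw \<Rightarrow> state set" where
  "states S = {Q. \<forall>n m. (n \<le> NB S \<and> m \<in> cache S n \<longrightarrow> Q n m \<le> cap S n m)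
                     \<and> (\<not> (n \<le> NB S \<and> m \<in> cache S n) \<longrightarrow> Q n m = 0)}"

definition arrivals :: "netw \<Rightarrow> (nat \<times> nat \<Rightarrow> nat) pmf" where
  "arrivals S = Pi_pmf ({0..NB S} \<times> {1..MC S}) 0 (\<lambda>(n,m). arr S n m)"

definition Atil0 :: "netw \<Rightarrow> (nat \<times> nat \<Rightarrow> nat) \<Rightarrow> nat \<Rightarrow> nat" where
  "Atil0 S A m = A (0,m) + (\<Sum>n\<in>{1..NB S} - Nset S m. A (n,m))"

definition next_state :: "netw \<Rightarrow> state \<Rightarrow> action \<Rightarrow> (nat \<times> nat \<Rightarrow> nat) \<Rightarrow> state" where
  "next_state S Q u A = (\<lambda>n m.
     if n = 0 \<and> m \<in> cache S 0 then
       min ((if u 0 \<noteq> m then Q 0 m else 0) + Atil0 S A m) (cap S 0 m)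
     else if 1 \<le> n \<and> n \<le> NB S \<and> m \<in> cache S n then
       min ((if u 0 \<noteq> m \<and> u n \<noteq> m then Q n m else 0) + A (n,m)) (cap S n m)
     else 0)"

definition delay :: "netw \<Rightarrow> state \<Rightarrow> real" where
  "delay S Q = (\<Sum>n\<in>{0..NB S}. \<Sum>m\<in>cache S n. real (Q n m))"

definition power :: "netw \<Rightarrow> action \<Rightarrow> real" where
  "power S u = (\<Sum>n\<in>{0..NB S}. pw S n (u n))"

definition cost :: "netw \<Rightarrow> state \<Rightarrow> action \<Rightarrow> real" where
  "cost S Q u = delay S Q + wt S * power S u"

definition Jfun :: "netw \<Rightarrow> (state \<Rightarrow> real) \<Rightarrow> state \<Rightarrow> action \<Rightarrow> real" where
  "Jfun S V Q u = cost S Q u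
     + measure_pmf.expectation (arrivals S) (\<lambda>A. V (next_state S Q u A))"

definition Jmin :: "netw \<Rightarrow> (state \<Rightarrow> real) \<Rightarrow> state \<Rightarrow> real" where
  "Jmin S V Q = Min ((\<lambda>u. Jfun S V Q u) ` actions S)"

fun rvi :: "netw \<Rightarrow> state \<Rightarrow> nat \<Rightarrow> state \<Rightarrow> real" where
  "rvi S Qr 0 = (\<lambda>_. 0)"
| "rvi S Qr (Suc l) = (\<lambda>Q. Jmin S (rvi S Qr l) Q - Jmin S (rvi S Qr l) Qr)"

definition updQ :: "state \<Rightarrow> nat \<Rightarrow> nat \<Rightarrow> nat \<Rightarrow> state" where
  "updQ Q n m x = Q(n := (Q n)(m := x))"

end

theory Submission
  imports Defs
begin

definition qle :: "state \<Rightarrow> state \<Rightarrow> bool" where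
  "qle Q Q' \<longleftrightarrow> (\<forall>n m. Q n m \<le> Q' n m)"

lemma cache_sub: assumes wf: "wf_netw S" shows "\<And>n. n \<le> NB S \<Longrightarrow> cache S n \<subseteq> {1..MC S}"
proof -
  fix n assume "n \<le> NB S" then show "cache S n \<subseteq> {1..MC S}"
    using wf unfolding wf_netw_def by (cases "n = 0") auto
qed

lemma finite_states:
  assumes wf: "wf_netw S" shows "finite (states S)"
proof -
  define C where "C = Max (case_prod (cap S) ` ({0..NB S}\<times>{1..MC S}))"
  define B where "B = {g::nat\<Rightarrow>nat. \<forall>m. (m \<in> {1..MC S} \<longrightarrow> g m \<in> {0..C}) \<and> (m \<notin> {1..MC S} \<longrightarrow> g m = 0)}"
  have fB: "finite B" unfolding B_def by (rule finite_set_of_finite_funs) auto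
  have fO: "finite {f. \<forall>x. (x \<in> {0..NB S} \<longrightarrow> f x \<in> B) \<and> (x \<notin> {0..NB S} \<longrightarrow> f x = (\<lambda>_. 0))}"
    by (rule finite_set_of_finite_funs[OF _ fB]) auto
  have cs: "\<And>n. n \<le> NB S \<Longrightarrow> cache S n \<subseteq> {1..MC S}"
    using cache_sub[OF wf] .
  have "states S \<subseteq> {f. \<forall>x. (x \<in> {0..NB S} \<longrightarrow> f x \<in> B) \<and> (x \<notin> {0..NB S} \<longrightarrow> f x = (\<lambda>_. 0))}"
  proof safe
    fix Q x assume Q: "Q \<in> states S"
    { assume x: "x \<in> {0..NB S}"
      show "Q x \<in> B" unfolding B_def
      proof (intro CollectI allI conjI impI)
        fix m assume m: "m \<in> {1..MC S}"
        show "Q x m \<in> {0..C}"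
        proof (cases "m \<in> cache S x")
          case True
          then have "Q x m \<le> cap S x m" using Q x unfolding states_def by auto
          also have "\<dots> \<le> C" unfolding C_def using x m by (intro Max_ge) force+
          finally show ?thesis by simp
        next
          case False then show ?thesis using Q unfolding states_def by auto
        qed
      next
        fix m assume m: "m \<notin> {1..MC S}"
        then have "m \<notin> cache S x" using cs[of x] x m by auto
        then show "Q x m = 0" using Q unfolding states_def by auto
      qed }
    { assume "x \<notin> {0..NB S}"
      then show "Q x = (\<lambda>_. 0)" using Q unfolding states_def by auto }
  qed
  then show ?thesis using fO finite_subset by blast
qed

lemma finite_actions:
  assumes wf: "wf_netw S" shows "finite (actions S)"
proof -
  have cs: "\<And>n. n \<le> NB S \<Longrightarrow> cache S n \<subseteq> {1..MC S}"
    using cache_sub[OF wf] .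
  have "actions S \<subseteq> {f. \<forall>x. (x \<in> {0..NB S} \<longrightarrow> f x \<in> {0..MC S}) \<and> (x \<notin> {0..NB S} \<longrightarrow> f x = 0)}"
  proof safe
    fix u x assume u: "u \<in> actions S" and x: "x \<in> {0..NB S}"
    then have "u x \<in> cache S x \<union> {0}" unfolding actions_def by auto
    then show "u x \<in> {0..MC S}" using cs[of x] x by auto
  next
    fix u x assume u: "u \<in> actions S" and x: "x \<notin> {0..NB S}"
    then show "u x = 0" unfolding actions_def by auto
  qed
  moreover have "finite {f. \<forall>x. (x \<in> {0..NB S} \<longrightarrow> f x \<in> {0..MC S}) \<and> (x \<notin> {0..NB S} \<longrightarrow> f x = (0::nat))}"
    by (rule finite_set_of_finite_funs) auto
  ultimately show ?thesis using finite_subset by blast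
qed

lemma actions_ne: "(\<lambda>_. 0) \<in> actions S"
  unfolding actions_def by auto

lemma next_in_states: "next_state S Q u A \<in> states S"
  unfolding states_def next_state_def by auto

lemma next_mono: assumes "qle Q Q'" shows "qle (next_state S Q u A) (next_state S Q' u A)"
  unfolding qle_def
proof (intro allI)
  fix n m
  have a: "Q n m \<le> Q' n m" "Q 0 m \<le> Q' 0 m" using assms by (auto simp: qle_def)
  show "next_state S Q u A n m \<le> next_state S Q' u A n m"
    unfolding next_state_def using a by (auto simp: min_def)
qed

lemma integ:
  fixes W :: "state \<Rightarrow> real"
  assumes wf: "wf_netw S"
  shows "integrable (measure_pmf (arrivals S)) (\<lambda>A. W (next_state S Q u A))"
proof -
  let ?B = "Max ((\<lambda>q. \<bar>W q\<bar>) ` states S)"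
  have "AE x in measure_pmf (arrivals S). norm (W (next_state S Q u x)) \<le> ?B"
    using finite_states[OF wf] next_in_states by (intro AE_I2) auto
  then show ?thesis by (rule measure_pmf.integrable_const_bound) simp
qed

lemma delay_mono: "qle Q Q' \<Longrightarrow> delay S Q \<le> delay S Q'"
  unfolding delay_def qle_def by (intro sum_mono) auto

definition monoS where
  "monoS S W \<longleftrightarrow> (\<forall>Q\<in>states S. \<forall>Q'\<in>states S. qle Q Q' \<longrightarrow> W Q \<le> W Q')"

lemma E_mono:
  fixes W :: "state \<Rightarrow> real"
  assumes wf: "wf_netw S" and W: "monoS S W" and le: "qle Q Q'"
  shows "measure_pmf.expectation (arrivals S) (\<lambda>A. W (next_state S Q u A))
     \<le> measure_pmf.expectation (arrivals S) (\<lambda>A. W (next_state S Q' u A))"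
  apply (rule integral_mono[OF integ[OF wf] integ[OF wf]])
  using W next_mono[OF le] next_in_states unfolding monoS_def by metis

lemma Jfun_mono:
  assumes wf: "wf_netw S" and W: "monoS S W" and le: "qle Q Q'"
  shows "Jfun S W Q u \<le> Jfun S W Q' u"
  unfolding Jfun_def cost_def using add_mono[OF delay_mono[OF le] E_mono[OF wf W le, of u]] by simp

lemma Jmin_mono:
  assumes wf: "wf_netw S" and W: "monoS S W" and le: "qle Q Q'"
  shows "Jmin S W Q \<le> Jmin S W Q'"
proof -
  have f: "finite ((\<lambda>u. Jfun S W Q' u) ` actions S)" using finite_actions[OF wf] by simp
  have ne: "(\<lambda>u. Jfun S W Q' u) ` actions S \<noteq> {}" using actions_ne by blast
  obtain u where u: "u \<in> actions S" "Jmin S W Q' = Jfun S W Q' u"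
    using Min_in[OF f ne] unfolding Jmin_def by auto
  have "Jmin S W Q \<le> Jfun S W Q u" unfolding Jmin_def
    using finite_actions[OF wf] u(1) by (intro Min_le) auto
  also have "\<dots> \<le> Jfun S W Q' u" by (rule Jfun_mono[OF wf W le])
  finally show ?thesis using u(2) by simp
qed

lemma rvi_mono: assumes wf: "wf_netw S" shows "monoS S (rvi S Qr l)"
proof (induction l)
  case 0 then show ?case unfolding monoS_def by simp
next
  case (Suc l) then show ?case unfolding monoS_def
    using Jmin_mono[OF wf Suc] by simp
qed

lemma V_mono:
  assumes wf: "wf_netw S" and conv: "\<forall>Q\<in>states S. (\<lambda>l. rvi S Qr l Q) \<longlonglongrightarrow> V Q"
  shows "monoS S V"
  unfolding monoS_def
proof (intro ballI impI)
  fix Q Q' assume Q: "Q \<in> states S" "Q' \<in> states S" and le: "qle Q Q'"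
  show "V Q \<le> V Q'"
    apply (rule LIMSEQ_le[OF conv[rule_format, OF Q(1)] conv[rule_format, OF Q(2)]])
    using rvi_mono[OF wf, of Qr] Q le unfolding monoS_def by blast
qed

lemma upd_states:
  "Q \<in> states S \<Longrightarrow> n \<le> NB S \<Longrightarrow> m \<in> cache S n \<Longrightarrow> x \<le> cap S n m \<Longrightarrow> updQ Q n m x \<in> states S"
  unfolding states_def updQ_def by auto

lemma upd_qle: "x \<le> y \<Longrightarrow> qle (updQ Q n m x) (updQ Q n m y)"
  unfolding qle_def updQ_def by auto

lemma next_upd:
  fixes u :: action
  assumes "(n = 0 \<and> u 0 = m) \<or> (n \<ge> 1 \<and> (u 0 = m \<or> u n = m))"
  shows "next_state S (updQ Q n m x) u A = next_state S (updQ Q n m y) u A"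
  using assms unfolding next_state_def updQ_def by (intro ext) auto

lemma key:
  fixes u v :: action and V :: "state \<Rightarrow> real"
  assumes wf: "wf_netw S" and V: "monoS S V" and Q: "Q \<in> states S"
    and n: "n \<le> NB S" "m \<in> cache S n" and xy: "x \<le> y" "y \<le> cap S n m"
    and gate: "(n = 0 \<and> u 0 = m) \<or> (n \<ge> 1 \<and> (u 0 = m \<or> u n = m))"
  shows "Jfun S V (updQ Q n m y) u - Jfun S V (updQ Q n m y) v
                 \<le> Jfun S V (updQ Q n m x) u - Jfun S V (updQ Q n m x) v"
proof -
  have e: "next_state S (updQ Q n m x) u = next_state S (updQ Q n m y) u"
    by (rule ext) (rule next_upd[OF gate])
  have "measure_pmf.expectation (arrivals S) (\<lambda>A. V (next_state S (updQ Q n m x) v A))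
     \<le> measure_pmf.expectation (arrivals S) (\<lambda>A. V (next_state S (updQ Q n m y) v A))"
    by (rule E_mono[OF wf V upd_qle[OF xy(1)]])
  then show ?thesis unfolding Jfun_def cost_def e by simp
qed

theorem lemma3:
  fixes S :: netw and Qr :: state and V :: "state \<Rightarrow> real"
  assumes wf: "wf_netw S"
    and ref: "Qr \<in> states S"
    and conv: "\<forall>Q\<in>states S. (\<lambda>l. rvi S Qr l Q) \<longlonglongrightarrow> V Q"
  shows "(\<forall>u\<in>actions S. \<forall>v\<in>actions S. \<forall>m\<in>cache S 0. u 0 = m \<longrightarrow>
            (\<forall>n\<in>{0} \<union> Nset S m. \<forall>Q\<in>states S. \<forall>x y. x \<le> y \<and> y \<le> cap S n m \<longrightarrow>
               Jfun S V (updQ Q n m y) u - Jfun S V (updQ Q n m y) v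
                 \<le> Jfun S V (updQ Q n m x) u - Jfun S V (updQ Q n m x) v))
       \<and> (\<forall>u\<in>actions S. \<forall>v\<in>actions S. \<forall>n\<in>{1..NB S}. \<forall>m\<in>cache S n. u n = m \<longrightarrow>
            (\<forall>Q\<in>states S. \<forall>x y. x \<le> y \<and> y \<le> cap S n m \<longrightarrow>
               Jfun S V (updQ Q n m y) u - Jfun S V (updQ Q n m y) v
                 \<le> Jfun S V (updQ Q n m x) u - Jfun S V (updQ Q n m x) v))"
proof (intro conjI ballI impI allI)
  have Vm: "monoS S V" by (rule V_mono[OF wf conv])
  {
    fix u v :: action and m n Q x y
    assume m: "m \<in> cache S 0" and um: "u 0 = m" and n: "n \<in> {0} \<union> Nset S m"
      and Q: "Q \<in> states S" and xy: "x \<le> y \<and> y \<le> cap S n m"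
    have nn: "n \<le> NB S" "m \<in> cache S n" using n m unfolding Nset_def by auto
    have g: "(n = 0 \<and> u 0 = m) \<or> (n \<ge> 1 \<and> (u 0 = m \<or> u n = m))" using um by auto
    show "Jfun S V (updQ Q n m y) u - Jfun S V (updQ Q n m y) v
                 \<le> Jfun S V (updQ Q n m x) u - Jfun S V (updQ Q n m x) v"
      using key[OF wf Vm Q nn _ _ g] xy by blast
  }
  {
    fix u v :: action and m n Q x y
    assume n: "n \<in> {1..NB S}" and m: "m \<in> cache S n" and um: "u n = m"
      and Q: "Q \<in> states S" and xy: "x \<le> y \<and> y \<le> cap S n m"
    have nn: "n \<le> NB S" using n by auto
    have g: "(n = 0 \<and> u 0 = m) \<or> (n \<ge> 1 \<and> (u 0 = m \<or> u n = m))" using um n by auto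
    show "Jfun S V (updQ Q n m y) u - Jfun S V (updQ Q n m y) v
                 \<le> Jfun S V (updQ Q n m x) u - Jfun S V (updQ Q n m x) v"
      using key[OF wf Vm Q nn m _ _ g] xy by blast
  }
qed

end
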